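(* Let $w_1=a$, $w_2=b$, $w_3=ba$, $w_4=baabbaa$, and $w_n = b\cdot\mathit{TM}_{2n-8}\cdot\overline{\mathit{TM}_{2n-6}}\cdot\overline{\mathit{TM}_{2n-6}}'$ for $n\ge 5$, and let $W=w_1w_2w_3\cdots$ be their infinite concatenation. Then $\tau^2(W)=W$.
   Context: Strings are over $\{a,b\}$. For a binary string $w$, $\overline{w}$ is obtained by exchanging $a$ and $b$ letterwise, and $w'$ is $w$ with its last letter removed; $\overline{w}'$ means $(\overline{w})'$. Thue–Morse words: $\mathit{TM}_0=a$ and $\mathit{TM}_k=\mathit{TM}_{k-1}\cdot\overline{\mathit{TM}_{k-1}}$ for $k\ge1$. The Thue–Morse morphism $\tau$ is the morphism with $\tau(a)=ab$, $\tau(b)=ba$, extended letterwise to infinite words; $\tau^2=\tau\circ\tau$. *)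

theory Defs
  imports Main
begin

datatype letter = A | B

fun flip :: "letter \<Rightarrow> letter" where
  "flip A = B" | "flip B = A"

definition bar :: "letter list \<Rightarrow> letter list" where
  "bar w = map flip w"

fun TM :: "nat \<Rightarrow> letter list" where
  "TM 0 = [A]"
| "TM (Suc k) = TM k @ bar (TM k)"

fun tau_letter :: "letter \<Rightarrow> letter list" where
  "tau_letter A = [A, B]"
| "tau_letter B = [B, A]"

definition tau_inf :: "(nat \<Rightarrow> letter) \<Rightarrow> (nat \<Rightarrow> letter)" where
  "tau_inf x = (\<lambda>i. tau_letter (x (i div 2)) ! (i mod 2))"

(* the words w_n, n \<ge> 1 (w 0 is unused) ; w' = butlast w *)
definition w :: "nat \<Rightarrow> letter list" where
  "w n = (if n = 1 then [A]
          else if n = 2 then [B]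
          else if n = 3 then [B, A]
          else if n = 4 then [B, A, A, B, B, A, A]
          else [B] @ TM (2*n - 8) @ bar (TM (2*n - 6)) @ butlast (bar (TM (2*n - 6))))"

(* infinite concatenation ws 0 ws 1 ws 2 ... of a sequence of nonempty finite words:
   position i lies within the concatenation of the first i+1 words *)
definition infconcat :: "(nat \<Rightarrow> 'a list) \<Rightarrow> nat \<Rightarrow> 'a" where
  "infconcat ws i = concat (map ws [0..<Suc i]) ! i"

definition W :: "nat \<Rightarrow> letter" where
  "W = infconcat (\<lambda>k. w (Suc k))"

end

theory Submission
  imports Defs
begin

function tm :: "nat \<Rightarrow> letter" where
  "tm 0 = A"
| "tm (Suc n) = (if even (Suc n) then tm (Suc n div 2) else flip (tm (Suc n div 2)))"
  by pat_completeness auto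
termination by (relation "measure id") (simp_all, presburger)

lemma flip_flip[simp]: "flip (flip c) = c" by (cases c) auto

lemma bar_bar[simp]: "bar (bar x) = x" by (simp add: bar_def comp_def)

lemma length_bar[simp]: "length (bar x) = length x" by (simp add: bar_def)

lemma bar_append[simp]: "bar (x @ y) = bar x @ bar y" by (simp add: bar_def)

lemma tm_rec: "tm j = (if even j then tm (j div 2) else flip (tm (j div 2)))"
  by (cases j) auto

lemma tm_flip: "j < 2^k \<Longrightarrow> tm (2^k + j) = flip (tm j)"
proof (induction k arbitrary: j)
  case 0
  then show ?case by simp
next
  case (Suc k)
  have d: "(2^Suc k + j) div 2 = 2^k + j div 2" by simp
  have e: "even (2^Suc k + j) = even j" by simp
  have "j div 2 < 2^k" using Suc.prems by simp
  then have ih: "tm (2^k + j div 2) = flip (tm (j div 2))" using Suc.IH by blast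
  have r1: "tm (2^Suc k + j) = (if even j then tm (2^k + j div 2) else flip (tm (2^k + j div 2)))"
    by (subst tm_rec) (simp only: d e)
  have r2: "tm j = (if even j then tm (j div 2) else flip (tm (j div 2)))"
    by (rule tm_rec)
  show ?case
    unfolding r1 using r2 ih by (simp del: tm.simps)
qed

lemma length_TM[simp]: "length (TM k) = 2^k"
  by (induction k) auto

lemma TM_nth: "i < 2^k \<Longrightarrow> TM k ! i = tm i"
proof (induction k arbitrary: i)
  case 0
  then show ?case by simp
next
  case (Suc k)
  show ?case
  proof (cases "i < 2^k")
    case True
    then show ?thesis using Suc by (simp add: nth_append)
  next
    case False
    then obtain j where j: "i = 2^k + j" "j < 2^k" using Suc.prems
      by (metis add_diff_inverse_nat mult_2 nat_add_left_cancel_less power_Suc)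
    then show ?thesis using Suc.IH[of j] tm_flip[of j k]
      by (simp add: nth_append bar_def)
  qed
qed

lemma tau_tm: "tau_inf tm = tm"
proof
  fix i
  show "tau_inf tm i = tm i"
    unfolding tau_inf_def
    apply (subst (2) tm_rec)
    by (cases "tm (i div 2)"; cases "even i") (auto simp: mod_2_eq_odd)
qed

definition P :: "nat \<Rightarrow> letter list" where
  "P n = concat (map (\<lambda>k. w (Suc k)) [0..<n])"

lemma P_Suc: "P (Suc n) = P n @ w (Suc n)"
  by (simp add: P_def)

lemma w_ne: "n \<ge> 1 \<Longrightarrow> w n \<noteq> []"
  by (simp add: w_def)

lemma length_P: "length (P n) \<ge> n"
proof (induction n)
  case 0 then show ?case by simp
next
  case (Suc n)
  have "w (Suc n) \<noteq> []" by (rule w_ne) simp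
  then have "length (w (Suc n)) \<ge> 1" by (cases "w (Suc n)") auto
  then show ?case using Suc by (simp add: P_Suc)
qed

lemma P_prefix: "\<exists>s. P (m + k) = P m @ s"
proof (induction k)
  case 0 then show ?case by simp
next
  case (Suc k)
  then obtain s where "P (m + k) = P m @ s" by blast
  then show ?case by (simp add: P_Suc)
qed

lemma last_TM: "TM k \<noteq> [] \<and> last (TM k) = (if even k then A else B)"
proof (induction k)
  case 0 then show ?case by simp
next
  case (Suc k)
  have "TM k \<noteq> []" using Suc by blast
  then show ?case using Suc by (auto simp: bar_def last_map)
qed

lemma TM_2: "TM (Suc (Suc k)) = TM k @ bar (TM k) @ bar (TM k) @ TM k"
  by simp

lemma butlast_bar_TM: "butlast (bar (TM (2*m))) @ [B] = bar (TM (2*m))"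
proof -
  have "TM (2*m) \<noteq> []" "last (TM (2*m)) = A" using last_TM[of "2*m"] by auto
  then have "bar (TM (2*m)) \<noteq> []" "last (bar (TM (2*m))) = B"
    by (auto simp: bar_def last_map)
  then show ?thesis by (metis append_butlast_last_id)
qed

lemma P_form: "P (m + 4) = TM (2*m+2) @ bar (TM (2*m+2)) @ butlast (bar (TM (2*m+2)))"
proof (induction m)
  case 0
  show ?case by (simp add: P_def w_def bar_def numeral_eq_Suc)
next
  case (Suc m)
  have wdef: "w (Suc (m + 4)) = [B] @ TM (2*m+2) @ bar (TM (2*m+4)) @ butlast (bar (TM (2*m+4)))"
    by (simp add: w_def algebra_simps)
  have eq: "2*(m+1) = 2*m+2" by simp
  have bb0: "butlast (bar (TM (2*m+2))) @ [B] = bar (TM (2*m+2))"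
    using butlast_bar_TM[of "m+1"] unfolding eq .
  have bb: "butlast (bar (TM (2*m+2))) @ [B] @ r = bar (TM (2*m+2)) @ r" for r
    using bb0 by (metis append_assoc)
  have t4: "TM (2*m+4) = TM (2*m+2) @ bar (TM (2*m+2)) @ bar (TM (2*m+2)) @ TM (2*m+2)"
    using TM_2[of "2*m+2"] by (simp add: numeral_eq_Suc)
  have "P (Suc m + 4) = P (m+4) @ w (Suc (m + 4))" using P_Suc[of "m+4"] by simp
  also have "\<dots> = TM (2*m+4) @ bar (TM (2*m+4)) @ butlast (bar (TM (2*m+4)))"
    unfolding Suc.IH wdef t4
    using bb by (simp del: TM.simps)
  moreover have eq2: "2*Suc m + 2 = 2*m+4" by simp
  ultimately show ?case by (simp only: eq2)
qed

lemma P_nth: "i < length (P (m+4)) \<Longrightarrow> P (m+4) ! i = tm i"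
proof -
  assume i: "i < length (P (m+4))"
  let ?T = "TM (2*m+2)"
  have t4: "TM (2*m+4) = ?T @ bar ?T @ bar ?T @ ?T"
    using TM_2[of "2*m+2"] by (simp add: numeral_eq_Suc)
  have eq: "2*(m+1) = 2*m+2" by simp
  have bb0: "butlast (bar (TM (2*m+2))) @ [B] = bar (TM (2*m+2))"
    using butlast_bar_TM[of "m+1"] unfolding eq .
  have bb: "butlast (bar (TM (2*m+2))) @ [B] @ r = bar (TM (2*m+2)) @ r" for r
    using bb0 by (metis append_assoc)
  have "TM (2*m+4) = P (m+4) @ [B] @ ?T"
    unfolding t4 P_form using bb by (simp del: TM.simps)
  then have "TM (2*m+4) ! i = P (m+4) ! i" using i by (simp add: nth_append)
  moreover have "i < 2^(2*m+4)"
    using i \<open>TM (2*m+4) = P (m+4) @ [B] @ ?T\<close>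
    by (metis length_TM length_append trans_less_add1)
  ultimately show ?thesis using TM_nth by metis
qed

lemma W_eq: "W = tm"
proof
  fix i
  have "W i = P (Suc i) ! i" by (simp add: W_def infconcat_def P_def)
  moreover obtain s where s: "P (Suc i + 4) = P (Suc i) @ s" using P_prefix by blast
  moreover have li: "i < length (P (Suc i))" using length_P[of "Suc i"] by simp
  ultimately have "W i = P (Suc i + 4) ! i" by (simp add: nth_append)
  also have "\<dots> = tm i" using P_nth[of i "Suc i"] li s by simp
  finally show "W i = tm i" .
qed

theorem mainTheorem10:
  shows "tau_inf (tau_inf W) = W"
  by (simp add: W_eq tau_tm)

end
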